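(* Let $\sigma:\mathbb R^n\to\mathbb R^{n\times m}$ be of class $C^1$, $u:\mathbb R^n\to\mathbb R$ of class $C^2$ and $\bar x\in\mathbb R^n$. Consider $$h(a_1,a_2)=K(\bar x)\begin{pmatrix}a_1\\ a_2\end{pmatrix}\cdot \begin{pmatrix}a_1\\ a_2\end{pmatrix},\qquad a_1,a_2\in\mathbb R^m,\ |a_1|,|a_2|\leq 1.$$ Then the minimum of $h$ is nonpositive. If this minimum is negative, then it is attained at an eigenvector $v=(a_1,a_2)$ of $K(\bar x)$ associated with the minimal eigenvalue $\lambda$ of $K(\bar x)$, with $|a_1|=|a_2|=1$ and $h(v)=2\lambda$.
   Context: With $\sigma_i$ the columns of $\sigma$, $\nabla u\,\sigma(x)=(\nabla u(x)\cdot\sigma_1(x),\dots,\nabla u(x)\cdot\sigma_m(x))$ and $D(\nabla u\,\sigma)$ its $m\times n$ Jacobian, define $S(x)={}^t\sigma(x)\,{}^tD(\nabla u\,\sigma)(x)\in\mathbb R^{m\times m}$, $S^*=\frac12(S+{}^tS)$ and the symmetric matrix $K(x)=\begin{pmatrix}S^*(x)&{}^tS(x)\\ S(x)&S^*(x)\end{pmatrix}\in\mathbb R^{2m\times2m}$. *)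

theory Defs
  imports "HOL-Analysis.Analysis"
begin

definition C1_map :: "('a::real_normed_vector \<Rightarrow> 'b::real_normed_vector) \<Rightarrow> bool" where
  "C1_map f \<longleftrightarrow> (\<exists>D. (\<forall>x. (f has_derivative blinfun_apply (D x)) (at x)) \<and> continuous_on UNIV D)"

definition grad :: "(real^'n \<Rightarrow> real) \<Rightarrow> real^'n \<Rightarrow> real^'n" where
  "grad u x = (\<chi> i. frechet_derivative u (at x) (axis i 1))"

definition C2_fun :: "(real^'n \<Rightarrow> real) \<Rightarrow> bool" where
  "C2_fun u \<longleftrightarrow> (\<forall>x. u differentiable (at x)) \<and> C1_map (grad u)"

text \<open>sigma(x) is an n x m matrix (n rows indexed by 'n, m columns indexed by 'm);
  nabla u sigma (x) = (grad u x . sigma_1 x, ..., grad u x . sigma_m x).\<close>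
definition grad_sigma :: "(real^'n \<Rightarrow> real) \<Rightarrow> (real^'n \<Rightarrow> real^'m^'n) \<Rightarrow> real^'n \<Rightarrow> real^'m" where
  "grad_sigma u \<sigma> x = (\<chi> i. grad u x \<bullet> column i (\<sigma> x))"

definition D_grad_sigma :: "(real^'n \<Rightarrow> real) \<Rightarrow> (real^'n \<Rightarrow> real^'m^'n) \<Rightarrow> real^'n \<Rightarrow> real^'n^'m" where
  "D_grad_sigma u \<sigma> x = matrix (frechet_derivative (grad_sigma u \<sigma>) (at x))"

definition S_mat :: "(real^'n \<Rightarrow> real) \<Rightarrow> (real^'n \<Rightarrow> real^'m^'n) \<Rightarrow> real^'n \<Rightarrow> real^'m^'m" where
  "S_mat u \<sigma> x = transpose (\<sigma> x) ** transpose (D_grad_sigma u \<sigma> x)"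

definition S_sym :: "(real^'n \<Rightarrow> real) \<Rightarrow> (real^'n \<Rightarrow> real^'m^'n) \<Rightarrow> real^'n \<Rightarrow> real^'m^'m" where
  "S_sym u \<sigma> x = (1/2) *\<^sub>R (S_mat u \<sigma> x + transpose (S_mat u \<sigma> x))"

text \<open>The 2m x 2m block matrix K, indices in 'm + 'm (Inl = first block, Inr = second block).\<close>
definition K_mat :: "(real^'n \<Rightarrow> real) \<Rightarrow> (real^'n \<Rightarrow> real^'m^'n) \<Rightarrow> real^'n \<Rightarrow> real^('m + 'm)^('m + 'm)" where
  "K_mat u \<sigma> x = (\<chi> p q. case (p, q) of
      (Inl i, Inl j) \<Rightarrow> S_sym u \<sigma> x $ i $ j
    | (Inl i, Inr j) \<Rightarrow> transpose (S_mat u \<sigma> x) $ i $ j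
    | (Inr i, Inl j) \<Rightarrow> S_mat u \<sigma> x $ i $ j
    | (Inr i, Inr j) \<Rightarrow> S_sym u \<sigma> x $ i $ j)"

definition stack :: "real^'m \<Rightarrow> real^'m \<Rightarrow> real^('m + 'm)" where
  "stack a1 a2 = (\<chi> p. case p of Inl i \<Rightarrow> a1 $ i | Inr i \<Rightarrow> a2 $ i)"

definition h_fun :: "(real^'n \<Rightarrow> real) \<Rightarrow> (real^'n \<Rightarrow> real^'m^'n) \<Rightarrow> real^'n \<Rightarrow> real^'m \<Rightarrow> real^'m \<Rightarrow> real" where
  "h_fun u \<sigma> x a1 a2 = (K_mat u \<sigma> x *v stack a1 a2) \<bullet> stack a1 a2"

definition mat_eigenvalue :: "real^'k^'k \<Rightarrow> real \<Rightarrow> bool" where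
  "mat_eigenvalue A l \<longleftrightarrow> (\<exists>v. v \<noteq> 0 \<and> A *v v = l *\<^sub>R v)"

definition min_eigenvalue :: "real^'k^'k \<Rightarrow> real \<Rightarrow> bool" where
  "min_eigenvalue A l \<longleftrightarrow> mat_eigenvalue A l \<and> (\<forall>\<mu>. mat_eigenvalue A \<mu> \<longrightarrow> l \<le> \<mu>)"

end

theory Submission
  imports Defs
begin

lemma sum_UNIV_plus:
  fixes f :: "('a::finite + 'b::finite) \<Rightarrow> real"
  shows "sum f UNIV = (\<Sum>i\<in>UNIV. f (Inl i)) + (\<Sum>j\<in>UNIV. f (Inr j))"
proof -
  have U: "(UNIV :: ('a+'b) set) = range Inl \<union> range Inr"
    by (rule set_eqI, case_tac x) auto
  have "sum f UNIV = sum f (range Inl) + sum f (range Inr)"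
    unfolding U by (rule sum.union_disjoint) auto
  also have "\<dots> = (\<Sum>i\<in>UNIV. f (Inl i)) + (\<Sum>j\<in>UNIV. f (Inr j))"
    by (simp add: sum.reindex)
  finally show ?thesis .
qed

lemma K_mult:
  fixes a b :: "real^'m" and u :: "real^'n \<Rightarrow> real" and \<sigma> x
  shows "K_mat u \<sigma> x *v stack a b = stack (S_sym u \<sigma> x *v a + transpose (S_mat u \<sigma> x) *v b)
      (S_mat u \<sigma> x *v a + S_sym u \<sigma> x *v b)"
  unfolding vec_eq_iff
proof
  fix p :: "'m + 'm"
  show "(K_mat u \<sigma> x *v stack a b) $ p = stack (S_sym u \<sigma> x *v a + transpose (S_mat u \<sigma> x) *v b)
      (S_mat u \<sigma> x *v a + S_sym u \<sigma> x *v b) $ p"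
    by (cases p) (simp_all add: matrix_vector_mult_def sum_UNIV_plus K_mat_def stack_def)
qed

lemma stack_inner: "stack a b \<bullet> stack c d = a \<bullet> c + b \<bullet> d"
  unfolding inner_vec_def by (simp add: sum_UNIV_plus stack_def)

lemma transp_inner: "(transpose (S::real^'m^'m) *v b) \<bullet> c = (S *v c) \<bullet> b"
  unfolding transpose_matrix_vector dot_lmul_matrix by (simp add: inner_commute)

lemma Ssym_mult: "S_sym u \<sigma> x *v a = (1/2) *\<^sub>R (S_mat u \<sigma> x *v a + transpose (S_mat u \<sigma> x) *v a)"
  unfolding S_sym_def by (simp add: vec_eq_iff matrix_vector_mult_def transpose_def sum_distrib_left algebra_simps sum.distrib del: transpose_matrix_vector)

lemma K_inner:
  fixes a b c d :: "real^'m" and u :: "real^'n \<Rightarrow> real" and \<sigma> x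
  defines "S \<equiv> S_mat u \<sigma> x"
  shows "(K_mat u \<sigma> x *v stack a b) \<bullet> stack c d
    = ((S *v a) \<bullet> c + (S *v c) \<bullet> a) / 2 + (S *v c) \<bullet> b + (S *v a) \<bullet> d
      + ((S *v b) \<bullet> d + (S *v d) \<bullet> b) / 2"
  unfolding K_mult stack_inner Ssym_mult S_def
  by (simp add: inner_add_left transp_inner algebra_simps add_divide_distrib del: transpose_matrix_vector)

lemma K_sym:
  fixes x y :: "real^('m::finite+'m)" and u :: "real^'n \<Rightarrow> real" and \<sigma> xb
  shows "(K_mat u \<sigma> xb *v x) \<bullet> y = (K_mat u \<sigma> xb *v y) \<bullet> x"
proof -
  have st: "\<And>z::real^('m+'m). z = stack (\<chi> i. z $ Inl i) (\<chi> i. z $ Inr i)"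
    unfolding vec_eq_iff stack_def by (auto split: sum.split)
  show ?thesis
    apply (subst (1 2) st[of x])
    apply (subst (1 2) st[of y])
    unfolding K_inner by (simp add: algebra_simps)
qed

lemma stack_eigen_norm:
  fixes a b :: "real^'m" and u :: "real^'n \<Rightarrow> real" and \<sigma> x
  assumes "K_mat u \<sigma> x *v stack a b = lam *\<^sub>R stack a b" "lam \<noteq> 0"
  shows "a \<bullet> a = b \<bullet> b"
proof -
  have E: "(K_mat u \<sigma> x *v stack a b) \<bullet> stack c d = lam * (a \<bullet> c + b \<bullet> d)" for c d
    using assms(1) by (simp add: stack_inner)
  note e1 = E[of a 0] and e2 = E[of 0 b] and e3 = E[of b 0] and e4 = E[of 0 a]
  note e = e1 e2 e3 e4
  note f = e[unfolded K_inner, simplified, simplified inner_commute[of b a]]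
  have "lam * (a \<bullet> a) = lam * (b \<bullet> b)"
    using f by (smt (verit))
  then show ?thesis using assms(2) by simp
qed

lemma sym_min_eig:
  fixes K :: "real^'k^'k"
  assumes sym: "\<And>x y. (K *v x) \<bullet> y = (K *v y) \<bullet> x"
  obtains v lam where "norm v = 1" "K *v v = lam *\<^sub>R v" "\<And>w. lam * (w \<bullet> w) \<le> (K *v w) \<bullet> w"
proof -
  define f where "f w = (K *v w) \<bullet> w" for w
  have cont: "continuous_on (sphere 0 1) f"
    unfolding f_def by (intro continuous_intros linear_continuous_on matrix_vector_mul_bounded_linear)
  have ne: "sphere (0::real^'k) 1 \<noteq> {}"
    using vector_choose_size[of 1] by auto
  obtain v where v: "v \<in> sphere 0 1" and vmin: "\<And>y. y \<in> sphere 0 1 \<Longrightarrow> f v \<le> f y"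
    using continuous_attains_inf[OF compact_sphere ne cont] by blast
  define lam where "lam = f v"
  have nv: "norm v = 1" using v by simp
  have vv: "v \<bullet> v = 1" using nv by (simp add: dot_square_norm)
  have fscale: "f (c *\<^sub>R w) = c^2 * f w" for c w
    unfolding f_def by (simp add: matrix_vector_mult_scaleR power2_eq_square)
  have Q: "lam * (w \<bullet> w) \<le> f w" for w
  proof (cases "w = 0")
    case True then show ?thesis by (simp add: f_def)
  next
    case False
    then have nw: "norm w > 0" by simp
    have "lam \<le> f ((1/norm w) *\<^sub>R w)" unfolding lam_def using nw by (intro vmin) simp
    also have "\<dots> = f w / (norm w)^2" by (simp add: fscale power_divide)
    finally have "lam * (norm w)^2 \<le> f w" using nw by (simp add: field_simps)
    then show ?thesis by (simp add: dot_square_norm)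
  qed
  define r where "r = K *v v - lam *\<^sub>R v"
  define q where "q = f r - lam * (r \<bullet> r)"
  define n where "n = r \<bullet> r"
  have q0: "q \<ge> 0" using Q[of r] unfolding q_def by simp
  have expand: "f (v + t *\<^sub>R r) - lam * ((v + t *\<^sub>R r) \<bullet> (v + t *\<^sub>R r)) = 2 * t * n + t^2 * q" for t
  proof -
    have "f (v + t *\<^sub>R r) = f v + t * ((K *v v) \<bullet> r + (K *v r) \<bullet> v) + t^2 * f r"
      unfolding f_def by (simp add: matrix_vector_right_distrib matrix_vector_mult_scaleR
         inner_add_left inner_add_right power2_eq_square algebra_simps)
    also have "(K *v r) \<bullet> v = (K *v v) \<bullet> r" by (rule sym)
    finally have A: "f (v + t *\<^sub>R r) = f v + 2 * t * ((K *v v) \<bullet> r) + t^2 * f r" by simp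
    have B: "(v + t *\<^sub>R r) \<bullet> (v + t *\<^sub>R r) = 1 + 2 * t * (v \<bullet> r) + t^2 * (r \<bullet> r)"
      using vv by (simp add: inner_add_left inner_add_right inner_commute power2_eq_square algebra_simps)
    have C: "n = (K *v v) \<bullet> r - lam * (v \<bullet> r)" unfolding n_def
      by (simp add: r_def inner_diff_left algebra_simps)
    show ?thesis unfolding A B C q_def lam_def by (simp add: algebra_simps)
  qed
  have n0: "n = 0"
  proof (rule ccontr)
    assume "n \<noteq> 0"
    then have np: "n > 0" unfolding n_def by simp
    define t where "t = - n / (q + 1)"
    have "0 \<le> 2 * t * n + t^2 * q" using Q[of "v + t *\<^sub>R r"] expand[of t] by simp
    also have "\<dots> = t * (2 * n + t * q)" by (simp add: power2_eq_square algebra_simps)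
    also have "\<dots> < 0"
    proof (rule mult_neg_pos)
      show "t < 0" unfolding t_def using np q0 by (simp add: field_simps)
      have "n * q / (q + 1) \<le> n" using np q0 by (simp add: divide_le_eq algebra_simps)
      then have "t * q \<ge> - n" unfolding t_def by (simp add: field_simps)
      then show "0 < 2 * n + t * q" using np by linarith
    qed
    finally show False by simp
  qed
  then have "r = 0" unfolding n_def by simp
  then have "K *v v = lam *\<^sub>R v" unfolding r_def by simp
  then show ?thesis using that nv Q unfolding f_def by blast
qed

theorem proposition4:
  fixes \<sigma> :: "real^'n \<Rightarrow> real^'m^'n" and u :: "real^'n \<Rightarrow> real" and xbar :: "real^'n"
  assumes "C1_map \<sigma>" and "C2_fun u"
  defines "D \<equiv> {(a1, a2). norm (a1 :: real^'m) \<le> 1 \<and> norm (a2 :: real^'m) \<le> 1}"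
  defines "hmin \<equiv> (INF p\<in>D. h_fun u \<sigma> xbar (fst p) (snd p))"
  shows "(\<exists>p\<in>D. h_fun u \<sigma> xbar (fst p) (snd p) = hmin)
    \<and> hmin \<le> 0
    \<and> (hmin < 0 \<longrightarrow>
         (\<exists>a1 a2 lam. norm a1 = 1 \<and> norm a2 = 1
            \<and> h_fun u \<sigma> xbar a1 a2 = hmin
            \<and> min_eigenvalue (K_mat u \<sigma> xbar) lam
            \<and> K_mat u \<sigma> xbar *v stack a1 a2 = lam *\<^sub>R stack a1 a2
            \<and> h_fun u \<sigma> xbar a1 a2 = 2 * lam))"
proof -
  let ?K = "K_mat u \<sigma> xbar"
  let ?h = "\<lambda>p. h_fun u \<sigma> xbar (fst p) (snd p)"
  obtain v lam where nv: "norm v = 1" and ev: "?K *v v = lam *\<^sub>R v"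
    and lb: "\<And>w. lam * (w \<bullet> w) \<le> (?K *v w) \<bullet> w"
    using sym_min_eig[of ?K] K_sym by blast
  define a1 where "a1 = (\<chi> i. v $ Inl i)"
  define a2 where "a2 = (\<chi> i. v $ Inr i)"
  have vst: "v = stack a1 a2"
    unfolding vec_eq_iff stack_def a1_def a2_def by (auto split: sum.split)
  have hlb: "lam * (a \<bullet> a + b \<bullet> b) \<le> h_fun u \<sigma> xbar a b" for a b
    using lb[of "stack a b"] unfolding h_fun_def by (simp add: stack_inner)
  have stack0: "stack (0::real^'m) 0 = 0"
    unfolding vec_eq_iff stack_def by (auto split: sum.split)
  have stack_scale: "stack (c *\<^sub>R a) (c *\<^sub>R b) = c *\<^sub>R stack a b" for c and a b :: "real^'m"
    unfolding vec_eq_iff stack_def by (auto split: sum.split)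
  have mineig: "min_eigenvalue ?K lam"
    unfolding min_eigenvalue_def mat_eigenvalue_def
  proof (intro conjI allI impI)
    show "\<exists>v. v \<noteq> 0 \<and> ?K *v v = lam *\<^sub>R v" using nv ev by (intro exI[of _ v]) auto
  next
    fix \<mu> assume "\<exists>w. w \<noteq> 0 \<and> ?K *v w = \<mu> *\<^sub>R w"
    then obtain w where w0: "w \<noteq> 0" and ew: "?K *v w = \<mu> *\<^sub>R w" by blast
    have "lam * (w \<bullet> w) \<le> \<mu> * (w \<bullet> w)" using lb[of w] ew by simp
    moreover have "w \<bullet> w > 0" using w0 by simp
    ultimately show "lam \<le> \<mu>" by simp
  qed
  have Dsq: "a \<bullet> a + b \<bullet> b \<le> 2" if "(a, b) \<in> D" for a b
  proof -
    have "norm a \<le> 1" "norm b \<le> 1" using that unfolding D_def by auto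
    then have "(norm a)^2 \<le> 1" "(norm b)^2 \<le> 1" by (simp_all add: power_le_one)
    then show ?thesis by (simp add: dot_square_norm)
  qed
  show ?thesis
  proof (cases "lam \<ge> 0")
    case True
    have hm: "hmin = 0" unfolding hmin_def
    proof (rule cInf_eq_minimum)
      show "0 \<in> ?h ` D"
        by (rule image_eqI[of _ _ "(0,0)"]) (auto simp: D_def h_fun_def stack0)
    next
      fix y assume "y \<in> ?h ` D"
      then obtain a b where "(a, b) \<in> D" "y = h_fun u \<sigma> xbar a b" by auto
      moreover have "0 \<le> lam * (a \<bullet> a + b \<bullet> b)" using True by simp
      ultimately show "0 \<le> y" using hlb[of a b] by linarith
    qed
    have "(0, 0) \<in> D" unfolding D_def by simp
    moreover have "h_fun u \<sigma> xbar 0 0 = 0" by (simp add: h_fun_def stack0)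
    ultimately show ?thesis using hm by force
  next
    case False
    then have lneg: "lam < 0" by simp
    have ev2: "?K *v stack a1 a2 = lam *\<^sub>R stack a1 a2" using ev vst by simp
    have eq: "a1 \<bullet> a1 = a2 \<bullet> a2" using stack_eigen_norm[OF ev2] lneg by simp
    have "a1 \<bullet> a1 + a2 \<bullet> a2 = 1"
      using nv vst by (metis stack_inner norm_eq_1 inner_commute)
    then have half: "a1 \<bullet> a1 = 1/2" "a2 \<bullet> a2 = 1/2" using eq by auto
    define b1 where "b1 = sqrt 2 *\<^sub>R a1"
    define b2 where "b2 = sqrt 2 *\<^sub>R a2"
    have bb: "b1 \<bullet> b1 = 1" "b2 \<bullet> b2 = 1" unfolding b1_def b2_def using half by (simp_all add: mult.assoc[symmetric])
    then have nb: "norm b1 = 1" "norm b2 = 1" by (simp_all add: norm_eq_sqrt_inner)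
    have evb: "?K *v stack b1 b2 = lam *\<^sub>R stack b1 b2"
      unfolding b1_def b2_def stack_scale using ev2 by (simp add: matrix_vector_mult_scaleR)
    have hb: "h_fun u \<sigma> xbar b1 b2 = 2 * lam"
      unfolding h_fun_def evb using bb by (simp add: stack_inner)
    have bD: "(b1, b2) \<in> D" unfolding D_def using nb by simp
    have hm: "hmin = 2 * lam" unfolding hmin_def
    proof (rule cInf_eq_minimum)
      show "2 * lam \<in> ?h ` D"
        by (rule image_eqI[of _ _ "(b1,b2)"]) (use hb bD in auto)
    next
      fix y assume "y \<in> ?h ` D"
      then obtain a b where ab: "(a, b) \<in> D" "y = h_fun u \<sigma> xbar a b" by auto
      have "2 * lam \<le> lam * (a \<bullet> a + b \<bullet> b)"
        using Dsq[OF ab(1)] lneg by (simp add: mult_le_cancel_left_neg)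
      then show "2 * lam \<le> y" using hlb[of a b] ab(2) by linarith
    qed
    show ?thesis
    proof (intro conjI impI)
      show "\<exists>p\<in>D. ?h p = hmin" using bD hb hm by force
      show "hmin \<le> 0" using hm lneg by simp
      show "\<exists>a1 a2 lam. norm a1 = 1 \<and> norm a2 = 1 \<and> h_fun u \<sigma> xbar a1 a2 = hmin
            \<and> min_eigenvalue ?K lam \<and> ?K *v stack a1 a2 = lam *\<^sub>R stack a1 a2
            \<and> h_fun u \<sigma> xbar a1 a2 = 2 * lam"
        using nb hb hm mineig evb by blast
    qed
  qed
qed

end
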